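(* Let $W$ be a finite-dimensional complex vector space and let $\mathcal{B}$ be a finite set of linear subspaces of $W$, equipped with a linear order. Suppose $\mathcal{B}$ contains two distinct subspaces $u,v$ with $u\subset v$, and let $\mathcal{B}'=\mathcal{B}\setminus\{u\}$ with the induced linear order. Then the natural inclusion $D(\mathcal{B}')\hookrightarrow D(\mathcal{B})$ is a quasi-isomorphism of cochain complexes (it induces an isomorphism on cohomology).
   Context: For a finite set $\mathcal{C}$ of linear subspaces of a complex vector space $W$, equipped with a linear order, $D(\mathcal{C})$ denotes the following cochain complex over $\mathbb{Q}$. As a vector space it has basis all subsets $\sigma\subseteq\mathcal{C}$. Write $\vee\sigma=\bigcap_{x\in\sigma}x$ (with $\vee\emptyset=W$). The degree of $\sigma$ is $\deg\sigma=2\operatorname{codim}_W(\vee\sigma)-|\sigma|$. For $\sigma=\{x_{i_1},\dots,x_{i_r}\}$ listed in increasing order for the given linear order, the differential is $$d\sigma=\sum_{j\,:\,\vee(\sigma\setminus\{x_{i_j}\})=\vee\sigma}(-1)^j\,(\sigma\setminus\{x_{i_j}\}).$$ Here $\mathcal{C}$ need not satisfy any non-inclusion condition. For $\mathcal{C}'\subseteq\mathcal{C}$ with the induced order, $D(\mathcal{C}')$ is the subcomplex of $D(\mathcal{C})$ spanned by subsets of $\mathcal{C}'$. *)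

theory Defs
  imports "HOL-Analysis.Analysis"
begin

text \<open>The ambient space W is complex^'n (a finite-dimensional complex vector space of
dimension CARD('n)); linear subspaces are complex subspaces (vec.subspace), and
dimension is complex dimension (vec.dim).  A linear order on a finite set C of subspaces
is a relation R with linear_order_on C R.  Cochains of D(C) are rational-valued
functions on finite sets of subspaces, supported on subsets of C.\<close>

type_synonym 'n subsp = "(complex ^ 'n::finite) set"

definition meet :: "('n::finite) subsp set \<Rightarrow> ('n::finite) subsp" where
  "meet \<sigma> = \<Inter> \<sigma>"

definition codim :: "('n::finite) subsp \<Rightarrow> nat" where
  "codim X = CARD('n) - vec.dim X"

definition deg :: "('n::finite) subsp set \<Rightarrow> int" where
  "deg \<sigma> = 2 * int (codim (meet \<sigma>)) - int (card \<sigma>)"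

text \<open>Position (1-based) of x in \<sigma> listed increasingly for R.\<close>
definition pos :: "(('n::finite) subsp \<times> ('n::finite) subsp) set \<Rightarrow> ('n::finite) subsp set \<Rightarrow> ('n::finite) subsp \<Rightarrow> nat" where
  "pos R \<sigma> x = card {y \<in> \<sigma>. (y, x) \<in> R}"

text \<open>Coefficient of the basis element \<tau> in d\<sigma>.\<close>
definition dcoef :: "(('n::finite) subsp \<times> ('n::finite) subsp) set \<Rightarrow> ('n::finite) subsp set \<Rightarrow> ('n::finite) subsp set \<Rightarrow> rat" where
  "dcoef R \<sigma> \<tau> =
     (\<Sum>x\<in>{x \<in> \<sigma>. \<tau> = \<sigma> - {x} \<and> meet (\<sigma> - {x}) = meet \<sigma>}. (-1) ^ pos R \<sigma> x)"

definition cochains :: "('n::finite) subsp set \<Rightarrow> int \<Rightarrow> (('n::finite) subsp set \<Rightarrow> rat) set" where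
  "cochains C k = {c. \<forall>\<sigma>. c \<sigma> \<noteq> 0 \<longrightarrow> \<sigma> \<subseteq> C \<and> deg \<sigma> = k}"

definition dif :: "('n::finite) subsp set \<Rightarrow> (('n::finite) subsp \<times> ('n::finite) subsp) set
                   \<Rightarrow> (('n::finite) subsp set \<Rightarrow> rat) \<Rightarrow> (('n::finite) subsp set \<Rightarrow> rat)" where
  "dif C R c = (\<lambda>\<tau>. \<Sum>\<sigma>\<in>Pow C. c \<sigma> * dcoef R \<sigma> \<tau>)"

definition cocycles where
  "cocycles C R k = {c \<in> cochains C k. dif C R c = (\<lambda>_. 0)}"

definition coboundaries where
  "coboundaries C R k = dif C R ` cochains C (k - 1)"

definition cls where
  "cls C R k x = {y \<in> cocycles C R k. x - y \<in> coboundaries C R k}"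

definition cohom where
  "cohom C R k = cls C R k ` cocycles C R k"

text \<open>Map on cohomology induced by the inclusion D(C') \<subseteq> D(C): a class is sent to the
class (in D(C)) of its representatives.\<close>
definition incl_cohom where
  "incl_cohom C R k X = (\<Union>x\<in>X. cls C R k x)"

definition quasi_iso_incl where
  "quasi_iso_incl C' R' C R \<longleftrightarrow> (\<forall>k. bij_betw (incl_cohom C R k) (cohom C' R' k) (cohom C R k))"

end

theory Submission imports Defs begin

definition sg :: "(('n::finite) subsp \<times> 'n subsp) set \<Rightarrow> 'n subsp set \<Rightarrow> 'n subsp \<Rightarrow> rat" where
  "sg R \<sigma> x = (-1) ^ pos R \<sigma> x"

definition Dop :: "('n::finite) subsp set \<Rightarrow> ('n subsp \<times> 'n subsp) set \<Rightarrow> ('n subsp set \<Rightarrow> rat) \<Rightarrow> ('n subsp set \<Rightarrow> rat)" where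
  "Dop C R c \<tau> = (if \<tau> \<subseteq> C then (\<Sum>x\<in>C-\<tau>. if meet \<tau> \<subseteq> x then c (insert x \<tau>) * sg R (insert x \<tau>) x else 0) else 0)"

definition Hop :: "(('n::finite) subsp \<times> 'n subsp) set \<Rightarrow> 'n subsp \<Rightarrow> 'n subsp \<Rightarrow> ('n subsp set \<Rightarrow> rat) \<Rightarrow> ('n subsp set \<Rightarrow> rat)" where
  "Hop R u v c \<tau> = (if u \<in> \<tau> \<and> v \<in> \<tau> then sg R \<tau> v * c (\<tau> - {v}) else 0)"

lemma meet_insert: "meet (insert x \<tau>) = x \<inter> meet \<tau>"
  by (simp add: meet_def)

lemma rem_iff: "(meet (insert x \<tau>) = meet \<tau>) \<longleftrightarrow> meet \<tau> \<subseteq> x"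
  by (auto simp: meet_def)

lemma pos_insert:
  assumes "finite \<tau>" "x \<notin> \<tau>"
  shows "pos R (insert x \<tau>) y = pos R \<tau> y + (if (x,y) \<in> R then 1 else 0)"
proof -
  have "{z \<in> insert x \<tau>. (z, y) \<in> R} = (if (x,y)\<in>R then insert x {z \<in> \<tau>. (z, y) \<in> R} else {z \<in> \<tau>. (z, y) \<in> R})"
    by auto
  then show ?thesis using assms by (simp add: pos_def)
qed

lemma sg_insert:
  assumes "finite \<tau>" "x \<notin> \<tau>"
  shows "sg R (insert x \<tau>) y = (if (x,y) \<in> R then - sg R \<tau> y else sg R \<tau> y)"
  using pos_insert[OF assms, of R y] by (simp add: sg_def)

lemma sg_sq: "sg R \<sigma> x * sg R \<sigma> x = 1"
  by (simp add: sg_def flip: power_add)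

lemma dcoef_insert:
  assumes "x \<notin> \<tau>"
  shows "dcoef R (insert x \<tau>) \<tau> = (if meet \<tau> \<subseteq> x then sg R (insert x \<tau>) x else 0)"
proof -
  have "{y \<in> insert x \<tau>. \<tau> = insert x \<tau> - {y} \<and> meet (insert x \<tau> - {y}) = meet (insert x \<tau>)}
        = (if meet \<tau> \<subseteq> x then {x} else {})"
    using assms by (auto simp: meet_def)
  then show ?thesis by (simp add: dcoef_def sg_def)
qed

lemma deg_insert:
  assumes "finite \<tau>" "x \<notin> \<tau>" "meet \<tau> \<subseteq> x"
  shows "deg (insert x \<tau>) = deg \<tau> - 1"
  using assms by (simp add: deg_def meet_insert Int_absorb1)

lemma dif_eq:
  assumes "finite C"
  shows "dif C R c \<tau> = Dop C R c \<tau>"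
proof (cases "\<tau> \<subseteq> C")
  case False
  have "dcoef R \<sigma> \<tau> = 0" if "\<sigma> \<in> Pow C" for \<sigma>
  proof -
    have e: "{x \<in> \<sigma>. \<tau> = \<sigma> - {x} \<and> meet (\<sigma> - {x}) = meet \<sigma>} = {}" using False that by auto
    show ?thesis unfolding dcoef_def by (simp only: e) simp
  qed
  then show ?thesis using False by (simp add: dif_def Dop_def)
next
  case True
  let ?S = "(\<lambda>x. insert x \<tau>) ` (C - \<tau>)"
  have z: "c \<sigma> * dcoef R \<sigma> \<tau> = 0" if "\<sigma> \<in> Pow C - ?S" for \<sigma>
  proof -
    have e: "{x \<in> \<sigma>. \<tau> = \<sigma> - {x} \<and> meet (\<sigma> - {x}) = meet \<sigma>} = {}"
    proof (rule ccontr)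
      assume "\<not> ?thesis"
      then obtain x where "x \<in> \<sigma>" "\<tau> = \<sigma> - {x}" by auto
      then have "\<sigma> = insert x \<tau>" "x \<in> C - \<tau>" using that by auto
      then show False using that by auto
    qed
    show ?thesis unfolding dcoef_def by (simp only: e) simp
  qed
  have "dif C R c \<tau> = (\<Sum>\<sigma>\<in>?S. c \<sigma> * dcoef R \<sigma> \<tau>)"
    unfolding dif_def
    by (rule sum.mono_neutral_right) (use assms z True in auto)
  also have "\<dots> = (\<Sum>x\<in>C-\<tau>. c (insert x \<tau>) * dcoef R (insert x \<tau>) \<tau>)"
    by (rule sum.reindex_cong[where l="\<lambda>x. insert x \<tau>"]) (auto simp: inj_on_def)
  also have "\<dots> = Dop C R c \<tau>"
    using True by (auto simp: Dop_def dcoef_insert intro!: sum.cong)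
  finally show ?thesis .
qed

context
  fixes C :: "('n::finite) subsp set" and R :: "('n subsp \<times> 'n subsp) set"
  assumes finC: "finite C"
    and reflR: "\<forall>x\<in>C. (x,x)\<in>R"
    and totR: "\<forall>x\<in>C. \<forall>y\<in>C. x \<noteq> y \<longrightarrow> ((x,y)\<in>R \<longleftrightarrow> (y,x)\<notin>R)"
begin

lemma dd: "Dop C R (Dop C R c) \<tau> = 0"
proof (cases "\<tau> \<subseteq> C")
  case False then show ?thesis by (simp add: Dop_def)
next
  case True
  have fin: "finite \<tau>" using True finC finite_subset by blast
  define G where "G x y = (if x = y then 0 else if meet \<tau> \<subseteq> x \<and> meet \<tau> \<subseteq> y then
      c (insert x (insert y \<tau>)) * (sg R \<tau> x * (if (x,y)\<in>R then - sg R \<tau> y else sg R \<tau> y)) else 0)" for x y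
  have step1: "(if meet \<tau> \<subseteq> x then Dop C R c (insert x \<tau>) * sg R (insert x \<tau>) x else 0)
      = (\<Sum>y\<in>C-\<tau>. G x y)" if x: "x \<in> C - \<tau>" for x
  proof (cases "meet \<tau> \<subseteq> x")
    case False
    then have "G x y = 0" for y by (simp add: G_def)
    then show ?thesis using False by simp
  next
    case mx: True
    have mi: "meet (insert x \<tau>) = meet \<tau>" using mx by (auto simp: meet_def)
    have "(\<Sum>y\<in>C-\<tau>. G x y) = G x x + (\<Sum>y\<in>C-\<tau>-{x}. G x y)"
      using x finC by (simp add: sum.remove)
    also have "\<dots> = (\<Sum>y\<in>C-\<tau>-{x}. G x y)" by (simp add: G_def)
    also have "\<dots> = (\<Sum>y\<in>C - insert x \<tau>. (if meet (insert x \<tau>) \<subseteq> y then c (insert y (insert x \<tau>)) * sg R (insert y (insert x \<tau>)) y else 0) * sg R (insert x \<tau>) x)"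
    proof (rule sum.cong)
      show "C - \<tau> - {x} = C - insert x \<tau>" by auto
    next
      fix y assume y: "y \<in> C - insert x \<tau>"
      have "sg R (insert y (insert x \<tau>)) y = - sg R (insert x \<tau>) y"
        using sg_insert[of "insert x \<tau>" y R y] y fin reflR by auto
      moreover have "sg R (insert x \<tau>) y = (if (x,y)\<in>R then - sg R \<tau> y else sg R \<tau> y)"
        using sg_insert[of \<tau> x R y] x fin by auto
      moreover have "sg R (insert x \<tau>) x = - sg R \<tau> x"
        using sg_insert[of \<tau> x R x] x fin reflR by auto
      ultimately show "G x y = (if meet (insert x \<tau>) \<subseteq> y then c (insert y (insert x \<tau>)) * sg R (insert y (insert x \<tau>)) y else 0) * sg R (insert x \<tau>) x"
      proof -
        have i: "insert x (insert y \<tau>) = insert y (insert x \<tau>)" by (rule insert_commute)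
        have ne: "x \<noteq> y" using y by auto
        show ?thesis using y mx mi i ne \<open>sg R (insert y (insert x \<tau>)) y = - sg R (insert x \<tau>) y\<close>
            \<open>sg R (insert x \<tau>) y = (if (x,y)\<in>R then - sg R \<tau> y else sg R \<tau> y)\<close>
            \<open>sg R (insert x \<tau>) x = - sg R \<tau> x\<close>
          unfolding G_def by (cases "(x,y)\<in>R") simp_all
      qed
    qed
    also have "\<dots> = Dop C R c (insert x \<tau>) * sg R (insert x \<tau>) x"
      using True x by (simp add: Dop_def sum_distrib_right)
    finally show ?thesis using mx by simp
  qed
  have anti: "G x y = - G y x" if "x \<in> C" "y \<in> C" for x y
  proof (cases "x = y")
    case True then show ?thesis by (simp add: G_def)
  next
    case False
    then have "(y,x)\<in>R \<longleftrightarrow> (x,y)\<notin>R" using totR that by blast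
    moreover have i: "insert x (insert y \<tau>) = insert y (insert x \<tau>)" by (rule insert_commute)
    ultimately show ?thesis using False unfolding G_def by (cases "(x,y)\<in>R") (auto simp: i)
  qed
  define S where "S = (\<Sum>x\<in>C-\<tau>. \<Sum>y\<in>C-\<tau>. G x y)"
  have "S = (\<Sum>y\<in>C-\<tau>. \<Sum>x\<in>C-\<tau>. G x y)" unfolding S_def by (rule sum.swap)
  also have "\<dots> = (\<Sum>y\<in>C-\<tau>. \<Sum>x\<in>C-\<tau>. - G y x)"
    apply (intro sum.cong refl) apply (rule anti) by auto
  also have "\<dots> = - S" by (simp add: S_def sum_negf)
  finally have "S = 0" by simp
  moreover have "Dop C R (Dop C R c) \<tau> = S"
  proof -
    have "Dop C R (Dop C R c) \<tau> = (\<Sum>x\<in>C-\<tau>. if meet \<tau> \<subseteq> x then Dop C R c (insert x \<tau>) * sg R (insert x \<tau>) x else 0)"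
      using True by (simp only: Dop_def[of C R "Dop C R c" \<tau>] if_True)
    also have "\<dots> = S" unfolding S_def by (rule sum.cong[OF refl step1])
    finally show ?thesis .
  qed
  ultimately show ?thesis by simp
qed


lemma Dop_cochain:
  assumes "c \<in> cochains C k"
  shows "Dop C R c \<in> cochains C (k+1)"
  unfolding cochains_def mem_Collect_eq
proof (intro allI impI)
  fix \<tau> assume nz: "Dop C R c \<tau> \<noteq> 0"
  then have tC: "\<tau> \<subseteq> C" by (auto simp: Dop_def split: if_splits)
  then have fin: "finite \<tau>" using finC finite_subset by blast
  from nz tC obtain x where x: "x \<in> C - \<tau>" and "(if meet \<tau> \<subseteq> x then c (insert x \<tau>) * sg R (insert x \<tau>) x else 0) \<noteq> 0"
    unfolding Dop_def by (auto dest: sum.not_neutral_contains_not_neutral)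
  then have m: "meet \<tau> \<subseteq> x" and cx: "c (insert x \<tau>) \<noteq> 0" by (auto split: if_splits)
  then have "deg (insert x \<tau>) = k" using assms by (auto simp: cochains_def)
  moreover have "deg (insert x \<tau>) = deg \<tau> - 1"
    using m x fin by (simp add: deg_def meet_insert Int_absorb1)
  ultimately show "\<tau> \<subseteq> C \<and> deg \<tau> = k + 1" using tC by simp
qed

lemma dif_fun: "dif C R c = Dop C R c"
  using dif_eq[OF finC] by blast

context
  fixes u v :: "('n::finite) subsp"
  assumes uC: "u \<in> C" and vC: "v \<in> C" and uv: "u \<noteq> v" and usub: "u \<subseteq> v"
begin


lemma meet_u: "u \<in> \<tau> \<Longrightarrow> meet \<tau> \<subseteq> u"
  by (auto simp: meet_def)

lemma Hop_cochain:
  assumes "c \<in> cochains C k"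
  shows "Hop R u v c \<in> cochains C (k-1)"
  unfolding cochains_def mem_Collect_eq
proof (intro allI impI)
  fix \<tau> assume nz: "Hop R u v c \<tau> \<noteq> 0"
  then have uv': "u \<in> \<tau>" "v \<in> \<tau>" and cz: "c (\<tau> - {v}) \<noteq> 0" by (auto simp: Hop_def split: if_splits)
  then have sub: "\<tau> - {v} \<subseteq> C" and dg: "deg (\<tau> - {v}) = k" using assms by (auto simp: cochains_def)
  have tC: "\<tau> \<subseteq> C" using sub vC by auto
  have fin: "finite (\<tau> - {v})" using sub finC finite_subset by blast
  have m: "meet (\<tau> - {v}) \<subseteq> v" using meet_u[of "\<tau> - {v}"] uv' uv usub by auto
  have e: "\<tau> = insert v (\<tau> - {v})" using uv' by auto
  have "deg (insert v (\<tau> - {v})) = deg (\<tau> - {v}) - 1"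
    using deg_insert[OF fin _ m] by simp
  then have "deg \<tau> = k - 1" using e dg by metis
  then show "\<tau> \<subseteq> C \<and> deg \<tau> = k - 1" using tC by simp
qed

lemma Hop_zero:
  assumes "\<forall>\<tau>. u \<in> \<tau> \<longrightarrow> w \<tau> = 0"
  shows "Hop R u v w = (\<lambda>_. 0)"
  using assms uv by (auto simp: Hop_def fun_eq_iff)

lemma K:
  assumes tC: "\<tau> \<subseteq> C" and ut: "u \<in> \<tau>"
  shows "c \<tau> = Dop C R (Hop R u v c) \<tau> + Hop R u v (Dop C R c) \<tau>"
proof (cases "v \<in> \<tau>")
  case False
  have fin: "finite \<tau>" using tC finC finite_subset by blast
  have vin: "v \<in> C - \<tau>" using vC False by auto
  have mv: "meet \<tau> \<subseteq> v" using meet_u[OF ut] usub by auto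
  have "Dop C R (Hop R u v c) \<tau> = (\<Sum>x\<in>C-\<tau>. if meet \<tau> \<subseteq> x then Hop R u v c (insert x \<tau>) * sg R (insert x \<tau>) x else 0)"
    using tC by (simp add: Dop_def)
  also have "\<dots> = (if meet \<tau> \<subseteq> v then Hop R u v c (insert v \<tau>) * sg R (insert v \<tau>) v else 0)
       + (\<Sum>x\<in>C-\<tau>-{v}. if meet \<tau> \<subseteq> x then Hop R u v c (insert x \<tau>) * sg R (insert x \<tau>) x else 0)"
    using vin finC by (simp add: sum.remove)
  also have "(\<Sum>x\<in>C-\<tau>-{v}. if meet \<tau> \<subseteq> x then Hop R u v c (insert x \<tau>) * sg R (insert x \<tau>) x else 0) = 0"
    using False by (intro sum.neutral) (auto simp: Hop_def)
  also have "Hop R u v c (insert v \<tau>) = sg R (insert v \<tau>) v * c \<tau>"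
    using False ut by (simp add: Hop_def)
  finally have "Dop C R (Hop R u v c) \<tau> = c \<tau>"
    using mv sg_sq[of R "insert v \<tau>" v] by (simp add: algebra_simps)
  moreover have "Hop R u v (Dop C R c) \<tau> = 0" using False by (simp add: Hop_def)
  ultimately show ?thesis by simp
next
  case True
  define \<rho> where "\<rho> = \<tau> - {v}"
  have te: "\<tau> = insert v \<rho>" and vr: "v \<notin> \<rho>" and ur: "u \<in> \<rho>" using True ut uv by (auto simp: \<rho>_def)
  have rC: "\<rho> \<subseteq> C" using tC by (auto simp: \<rho>_def)
  have fin: "finite \<rho>" using rC finC finite_subset by blast
  have mr: "meet \<rho> \<subseteq> v" using meet_u[OF ur] usub by auto
  have mt: "meet \<tau> = meet \<rho>" using mr te by (simp add: meet_insert Int_absorb1)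
  define f where "f x = (if meet \<rho> \<subseteq> x then c (insert x \<rho>) * sg R (insert x \<rho>) x else 0)" for x
  define g where "g x = (if meet \<tau> \<subseteq> x then Hop R u v c (insert x \<tau>) * sg R (insert x \<tau>) x else 0)" for x
  have vin: "v \<in> C - \<rho>" using vC vr by auto
  have CC: "C - \<rho> - {v} = C - \<tau>" using te by auto
  have "Dop C R c \<rho> = (\<Sum>x\<in>C-\<rho>. f x)" using rC by (simp add: Dop_def f_def)
  also have "\<dots> = f v + (\<Sum>x\<in>C-\<tau>. f x)" using vin finC CC by (simp add: sum.remove)
  finally have H1: "Hop R u v (Dop C R c) \<tau> = sg R \<tau> v * (f v + (\<Sum>x\<in>C-\<tau>. f x))"
    using True ut te vr by (simp add: Hop_def)
  have fv: "f v = c \<tau> * sg R \<tau> v" using mr te by (simp add: f_def)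
  have H2: "Dop C R (Hop R u v c) \<tau> = (\<Sum>x\<in>C-\<tau>. g x)" using tC by (simp add: Dop_def g_def)
  have pw: "g x + sg R \<tau> v * f x = 0" if x: "x \<in> C - \<tau>" for x
  proof -
    have xv: "x \<noteq> v" "x \<notin> \<rho>" "x \<notin> \<tau>" "x \<in> C" using x te by auto
    have ie: "insert x \<tau> - {v} = insert x \<rho>" using te xv vr by auto
    have tot: "(v,x)\<in>R \<longleftrightarrow> (x,v)\<notin>R" using totR xv vC by blast
    have finT: "finite \<tau>" using te fin by simp
    have s1: "sg R (insert x \<tau>) v = (if (x,v)\<in>R then - sg R \<tau> v else sg R \<tau> v)"
      using sg_insert[OF finT xv(3)] by simp
    have s2: "sg R (insert x \<tau>) x = - sg R \<tau> x"
      using sg_insert[OF finT xv(3), of R x] reflR xv by simp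
    have s3: "sg R \<tau> x = (if (v,x)\<in>R then - sg R \<rho> x else sg R \<rho> x)"
      using sg_insert[OF fin vr, of R x] te by simp
    have s4: "sg R (insert x \<rho>) x = - sg R \<rho> x"
      using sg_insert[OF fin xv(2), of R x] reflR xv by simp
    have hx: "Hop R u v c (insert x \<tau>) = sg R (insert x \<tau>) v * c (insert x \<rho>)"
      using ut True ie by (simp add: Hop_def)
    show ?thesis unfolding g_def f_def mt hx s1 s2 s3 s4
      using tot by (cases "(x,v)\<in>R") (simp_all add: algebra_simps)
  qed
  have "Dop C R (Hop R u v c) \<tau> + Hop R u v (Dop C R c) \<tau> = (\<Sum>x\<in>C-\<tau>. g x + sg R \<tau> v * f x) + sg R \<tau> v * f v"
    unfolding H1 H2 by (simp add: sum.distrib sum_distrib_left algebra_simps)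
  also have "\<dots> = c \<tau>" using pw fv sg_sq[of R \<tau> v] by (simp add: algebra_simps)
  finally show ?thesis by simp
qed

end

end


lemma dif_diff: "dif C R (a - b) = dif C R a - dif C R b"
  by (rule ext) (simp add: dif_def sum_subtractf left_diff_distrib)

lemma dif_add: "dif C R (\<lambda>s. a s + b s) = (\<lambda>t. dif C R a t + dif C R b t)"
  by (rule ext) (simp add: dif_def sum.distrib distrib_right)

lemma dif_zero: "dif C R (\<lambda>_. 0) = (\<lambda>_. 0)"
  by (rule ext) (simp add: dif_def)

lemma cochains_diff: "a \<in> cochains C k \<Longrightarrow> b \<in> cochains C k \<Longrightarrow> a - b \<in> cochains C k"
  unfolding cochains_def mem_Collect_eq
proof (intro allI impI)
  fix \<sigma> assume A: "\<forall>\<sigma>. a \<sigma> \<noteq> 0 \<longrightarrow> \<sigma> \<subseteq> C \<and> deg \<sigma> = k" and B: "\<forall>\<sigma>. b \<sigma> \<noteq> 0 \<longrightarrow> \<sigma> \<subseteq> C \<and> deg \<sigma> = k"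
    and "(a - b) \<sigma> \<noteq> 0"
  then have "a \<sigma> \<noteq> 0 \<or> b \<sigma> \<noteq> 0" by auto
  then show "\<sigma> \<subseteq> C \<and> deg \<sigma> = k" using A B by blast
qed

lemma cochains_add: "a \<in> cochains C k \<Longrightarrow> b \<in> cochains C k \<Longrightarrow> (\<lambda>s. a s + b s) \<in> cochains C k"
  unfolding cochains_def mem_Collect_eq
proof (intro allI impI)
  fix \<sigma> assume A: "\<forall>\<sigma>. a \<sigma> \<noteq> 0 \<longrightarrow> \<sigma> \<subseteq> C \<and> deg \<sigma> = k" and B: "\<forall>\<sigma>. b \<sigma> \<noteq> 0 \<longrightarrow> \<sigma> \<subseteq> C \<and> deg \<sigma> = k"
    and "a \<sigma> + b \<sigma> \<noteq> 0"
  then have "a \<sigma> \<noteq> 0 \<or> b \<sigma> \<noteq> 0" by auto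
  then show "\<sigma> \<subseteq> C \<and> deg \<sigma> = k" using A B by blast
qed

lemma cochains_zero: "(\<lambda>_. 0) \<in> cochains C k"
  by (simp add: cochains_def)

lemma cob_diff: "a \<in> coboundaries C R k \<Longrightarrow> b \<in> coboundaries C R k \<Longrightarrow> a - b \<in> coboundaries C R k"
  unfolding coboundaries_def
  by (auto simp flip: dif_diff intro!: imageI cochains_diff)

lemma cob_add: "a \<in> coboundaries C R k \<Longrightarrow> b \<in> coboundaries C R k \<Longrightarrow> (\<lambda>s. a s + b s) \<in> coboundaries C R k"
  unfolding coboundaries_def
  by (auto simp flip: dif_add intro!: imageI cochains_add)

lemma cob_zero: "(\<lambda>_. 0) \<in> coboundaries C R k"
  unfolding coboundaries_def using dif_zero[of C R] cochains_zero[of C "k-1"]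
  by (metis image_eqI)

lemma cls_self: "x \<in> cocycles C R k \<Longrightarrow> x \<in> cls C R k x"
  using cob_zero[of C R k] by (simp add: cls_def fun_diff_def)

lemma cls_eq:
  assumes "x \<in> cocycles C R k" "y \<in> cocycles C R k"
  shows "cls C R k x = cls C R k y \<longleftrightarrow> x - y \<in> coboundaries C R k"
proof
  assume "cls C R k x = cls C R k y"
  then have "y \<in> cls C R k x" using cls_self[OF assms(2)] by simp
  then show "x - y \<in> coboundaries C R k" by (simp add: cls_def)
next
  assume xy: "x - y \<in> coboundaries C R k"
  show "cls C R k x = cls C R k y"
  proof (rule set_eqI)
    fix z
    have "x - z \<in> coboundaries C R k \<longleftrightarrow> y - z \<in> coboundaries C R k"
    proof
      assume "x - z \<in> coboundaries C R k"
      from cob_diff[OF this xy] show "y - z \<in> coboundaries C R k" by (simp add: fun_diff_def)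
    next
      assume "y - z \<in> coboundaries C R k"
      from cob_add[OF xy this] show "x - z \<in> coboundaries C R k" by (simp add: fun_diff_def)
    qed
    then show "z \<in> cls C R k x \<longleftrightarrow> z \<in> cls C R k y" by (simp add: cls_def)
  qed
qed

lemma dif_restrict:
  assumes "finite C" "C' \<subseteq> C" "\<forall>\<sigma>. c \<sigma> \<noteq> 0 \<longrightarrow> \<sigma> \<subseteq> C'"
  shows "dif C' (R \<inter> (C' \<times> C')) c = dif C R c"
proof (rule ext)
  fix \<tau>
  have pe: "dcoef (R \<inter> (C' \<times> C')) \<sigma> \<tau> = dcoef R \<sigma> \<tau>" if "\<sigma> \<subseteq> C'" for \<sigma>
  proof -
    have "pos (R \<inter> (C' \<times> C')) \<sigma> x = pos R \<sigma> x" if "x \<in> \<sigma>" for x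
      unfolding pos_def using \<open>\<sigma> \<subseteq> C'\<close> that by (intro arg_cong[where f=card]) auto
    then show ?thesis unfolding dcoef_def by (intro sum.cong refl) auto
  qed
  have "dif C R c \<tau> = (\<Sum>\<sigma>\<in>Pow C'. c \<sigma> * dcoef R \<sigma> \<tau>)"
    unfolding dif_def
    by (rule sum.mono_neutral_right) (use assms in \<open>auto intro: finite_subset\<close>)
  also have "\<dots> = dif C' (R \<inter> (C' \<times> C')) c \<tau>"
    unfolding dif_def using pe by (intro sum.cong refl) auto
  finally show "dif C' (R \<inter> (C' \<times> C')) c \<tau> = dif C R c \<tau>" by simp
qed



theorem proposition2p1:
  fixes B :: "(complex ^ 'n) set set" and R :: "((complex ^ 'n) set \<times> (complex ^ 'n) set) set"
    and u v :: "(complex ^ 'n) set"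
  assumes "finite B"
    and "\<forall>X\<in>B. vec.subspace X"
    and "linear_order_on B R"
    and "u \<in> B" and "v \<in> B" and "u \<noteq> v" and "u \<subseteq> v"
  shows "quasi_iso_incl (B - {u}) (R \<inter> ((B - {u}) \<times> (B - {u}))) B R"
proof -
  note fin = assms(1) and uC = assms(4) and vC = assms(5) and uv = assms(6) and usub = assms(7)
  have refl: "\<forall>x\<in>B. (x,x)\<in>R" using assms(3)
    unfolding linear_order_on_def partial_order_on_def preorder_on_def refl_on_def by blast
  have tot: "\<forall>x\<in>B. \<forall>y\<in>B. x \<noteq> y \<longrightarrow> ((x,y)\<in>R \<longleftrightarrow> (y,x)\<notin>R)"
    using assms(3) unfolding linear_order_on_def partial_order_on_def total_on_def antisym_def by blast
  define B' where "B' = B - {u}"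
  define R' where "R' = R \<inter> (B' \<times> B')"
  have dd': "Dop B R (Dop B R c) = (\<lambda>_. 0)" for c using dd[OF fin refl tot] by blast
  have difD: "dif B R c = Dop B R c" for c using dif_fun[OF fin refl tot] .
  have KK: "c \<tau> = Dop B R (Hop R u v c) \<tau> + Hop R u v (Dop B R c) \<tau>" if "\<tau> \<subseteq> B" "u \<in> \<tau>" for c \<tau>
    using K[OF fin refl tot uC vC uv usub that] .
  have coch': "c \<in> cochains B' k \<longleftrightarrow> c \<in> cochains B k \<and> (\<forall>\<tau>. u \<in> \<tau> \<longrightarrow> c \<tau> = 0)" for c k
    unfolding cochains_def B'_def by auto
  have dres: "dif B' R' c = dif B R c" if "c \<in> cochains B' j" for c j
    unfolding R'_def by (rule dif_restrict) (use fin that in \<open>auto simp: B'_def cochains_def\<close>)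
  have Zsub: "cocycles B' R' k \<subseteq> cocycles B R k" for k
    unfolding cocycles_def using coch' dres by auto
  have Bdsub: "coboundaries B' R' k \<subseteq> coboundaries B R k" for k
    unfolding coboundaries_def using coch' dres by auto
  have inj_key: "w \<in> coboundaries B' R' k" if w: "w \<in> cochains B' k" "w \<in> coboundaries B R k" for w k
  proof -
    obtain b where b: "b \<in> cochains B (k-1)" "w = dif B R b" using w(2) by (auto simp: coboundaries_def)
    define b' where "b' = b - Dop B R (Hop R u v b)"
    have h: "Hop R u v b \<in> cochains B (k-1-1)" using Hop_cochain[OF fin refl tot uC vC uv usub b(1)] .
    have dh: "Dop B R (Hop R u v b) \<in> cochains B (k-1)" using Dop_cochain[OF fin refl tot h] by simp
    have b'c: "b' \<in> cochains B (k-1)" unfolding b'_def using cochains_diff[OF b(1) dh] .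
    have wz: "\<forall>\<tau>. u \<in> \<tau> \<longrightarrow> w \<tau> = 0" using w(1) coch' by blast
    have hw: "Hop R u v w = (\<lambda>_. 0)" using Hop_zero[OF fin refl tot uC vC uv usub wz] .
    have "b' \<tau> = 0" if "u \<in> \<tau>" for \<tau>
    proof (cases "\<tau> \<subseteq> B")
      case True
      have "b \<tau> = Dop B R (Hop R u v b) \<tau> + Hop R u v (Dop B R b) \<tau>" using KK[OF True that] .
      moreover have "Dop B R b = w" using b(2) difD by simp
      ultimately show ?thesis using hw by (simp add: b'_def)
    next
      case False then show ?thesis using b'c by (auto simp: cochains_def)
    qed
    then have b'c': "b' \<in> cochains B' (k-1)" using coch' b'c by blast
    have "dif B' R' b' = dif B R b'" using dres[OF b'c'] .
    also have "\<dots> = w" unfolding b'_def dif_diff using b(2) difD dd' by (simp add: fun_diff_def)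
    finally show ?thesis unfolding coboundaries_def using b'c' by (metis image_eqI)
  qed
  have surj_key: "\<exists>z'\<in>cocycles B' R' k. z - z' \<in> coboundaries B R k" if z: "z \<in> cocycles B R k" for z k
  proof -
    have zc: "z \<in> cochains B k" and dz: "dif B R z = (\<lambda>_. 0)" using z by (auto simp: cocycles_def)
    have h: "Hop R u v z \<in> cochains B (k-1)" using Hop_cochain[OF fin refl tot uC vC uv usub zc] .
    have dh: "Dop B R (Hop R u v z) \<in> cochains B k" using Dop_cochain[OF fin refl tot h] by simp
    define z' where "z' = z - Dop B R (Hop R u v z)"
    have z'c: "z' \<in> cochains B k" unfolding z'_def using cochains_diff[OF zc dh] .
    have Dz: "Dop B R z = (\<lambda>_. 0)" using dz difD by simp
    have "z' \<tau> = 0" if "u \<in> \<tau>" for \<tau>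
    proof (cases "\<tau> \<subseteq> B")
      case True
      have "z \<tau> = Dop B R (Hop R u v z) \<tau> + Hop R u v (Dop B R z) \<tau>" using KK[OF True that] .
      then show ?thesis unfolding Dz by (simp add: z'_def Hop_def)
    next
      case False then show ?thesis using z'c by (auto simp: cochains_def)
    qed
    then have z'c': "z' \<in> cochains B' k" using coch' z'c by blast
    have "dif B' R' z' = dif B R z'" using dres[OF z'c'] .
    also have "\<dots> = (\<lambda>_. 0)" unfolding z'_def dif_diff using dz difD dd' by (simp add: fun_diff_def)
    finally have "z' \<in> cocycles B' R' k" using z'c' by (simp add: cocycles_def)
    moreover have "z - z' \<in> coboundaries B R k"
    proof -
      have "z - z' = dif B R (Hop R u v z)" unfolding z'_def using difD by (simp add: fun_diff_def)
      then show ?thesis unfolding coboundaries_def using h by (metis image_eqI)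
    qed
    ultimately show ?thesis by blast
  qed
  have incl: "incl_cohom B R k (cls B' R' k x) = cls B R k x" if x: "x \<in> cocycles B' R' k" for x k
  proof
    show "incl_cohom B R k (cls B' R' k x) \<subseteq> cls B R k x"
    proof
      fix z assume "z \<in> incl_cohom B R k (cls B' R' k x)"
      then obtain y where y: "y \<in> cls B' R' k x" and zy: "z \<in> cls B R k y" by (auto simp: incl_cohom_def)
      have yZ: "y \<in> cocycles B' R' k" "x - y \<in> coboundaries B' R' k" using y by (auto simp: cls_def)
      have "cls B R k x = cls B R k y"
        using cls_eq[of x B R k y] x yZ Zsub Bdsub by blast
      then show "z \<in> cls B R k x" using zy by simp
    qed
  next
    show "cls B R k x \<subseteq> incl_cohom B R k (cls B' R' k x)"
      unfolding incl_cohom_def using cls_self[OF x] by blast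
  qed
  have "bij_betw (incl_cohom B R k) (cohom B' R' k) (cohom B R k)" for k
  proof (rule bij_betw_imageI)
    show "inj_on (incl_cohom B R k) (cohom B' R' k)"
    proof (rule inj_onI)
      fix X Y assume X: "X \<in> cohom B' R' k" and Y: "Y \<in> cohom B' R' k"
        and eq: "incl_cohom B R k X = incl_cohom B R k Y"
      obtain x where x: "x \<in> cocycles B' R' k" "X = cls B' R' k x" using X by (auto simp: cohom_def)
      obtain y where y: "y \<in> cocycles B' R' k" "Y = cls B' R' k y" using Y by (auto simp: cohom_def)
      have "cls B R k x = cls B R k y" using eq x y incl by simp
      then have "x - y \<in> coboundaries B R k" using cls_eq[of x B R k y] x y Zsub by blast
      moreover have "x - y \<in> cochains B' k"
        using x y cochains_diff[of x B' k y] by (simp add: cocycles_def)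
      ultimately have "x - y \<in> coboundaries B' R' k" using inj_key by blast
      then show "X = Y" using cls_eq[of x B' R' k y] x y by simp
    qed
  next
    show "incl_cohom B R k ` cohom B' R' k = cohom B R k"
    proof
      show "incl_cohom B R k ` cohom B' R' k \<subseteq> cohom B R k"
      proof
        fix Z assume "Z \<in> incl_cohom B R k ` cohom B' R' k"
        then obtain x where x: "x \<in> cocycles B' R' k" "Z = incl_cohom B R k (cls B' R' k x)"
          by (auto simp: cohom_def)
        then have "Z = cls B R k x" using incl by simp
        moreover have "x \<in> cocycles B R k" using x(1) Zsub by blast
        ultimately show "Z \<in> cohom B R k" unfolding cohom_def by blast
      qed
    next
      show "cohom B R k \<subseteq> incl_cohom B R k ` cohom B' R' k"
      proof
        fix Z assume "Z \<in> cohom B R k"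
        then obtain z where z: "z \<in> cocycles B R k" "Z = cls B R k z" by (auto simp: cohom_def)
        obtain z' where z': "z' \<in> cocycles B' R' k" "z - z' \<in> coboundaries B R k" using surj_key[OF z(1)] by blast
        have "Z = cls B R k z'" using z z' cls_eq[of z B R k z'] Zsub by blast
        also have "\<dots> = incl_cohom B R k (cls B' R' k z')" using incl[OF z'(1)] by simp
        finally show "Z \<in> incl_cohom B R k ` cohom B' R' k" using z'(1) by (auto simp: cohom_def)
      qed
    qed
  qed
  then show ?thesis unfolding quasi_iso_incl_def B'_def R'_def by blast
qed

end
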